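(* Let $m$ be a positive integer and for $n\ge0$ let \[ G_n^{(m)}(q)=\sum_{0\leq k_m\leq\dots\leq k_1\leq n}q^{-2k_m}q^{\sum_{j=1}^m(k_j^2+2k_j)} \frac{(q)_n^2}{(q)_{k_m}^2(q)_{n-k_1}\prod_{j=1}^{m-1}(q)_{k_j-k_{j+1}}} \cdot\frac{(1-q^{n+1})(1-q^{n+2})}{(1-q^{n-k_m+1})(1-q^{n-k_m+2})}\in\mathbb{Z}[[q]]. \] Then for every $n\ge 0$, \[ G_n^{(m)}(q)\equiv(q)_{\infty}\sum_{0\leq k_m\leq\dots\leq k_2\leq k_1}\frac{q^{-2k_m}q^{\sum_{j=1}^m(k_j^2+2k_j)}}{(q)_{k_m}^2(q)_{k_1-k_2}\cdots(q)_{k_{m-1}-k_m}}\pmod{q^{n+1}\mathbb{Z}[[q]]}. \]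
   Context: $(q)_k=\prod_{l=1}^{k}(1-q^l)$ for $k\ge0$, $(q)_0=1$, $(q)_\infty=\prod_{l\ge1}(1-q^l)$; rational functions are expanded as power series in $q$; empty products equal $1$. *)

theory Defs
  imports "HOL-Computational_Algebra.Formal_Power_Series"
begin

definition qpoch :: "nat \<Rightarrow> rat fps" where
  "qpoch k = (\<Prod>l = 1..k. (1 - fps_X ^ l))"

text \<open>(q)_infinity as the limit of (q)_N in the q-adic (fps metric) topology.\<close>
definition qpoch_inf :: "rat fps" where
  "qpoch_inf = lim qpoch"

text \<open>Chains k_m \<le> ... \<le> k_1 \<le> N, encoded as functions nat \<Rightarrow> nat supported on {1..m}.\<close>
definition chains :: "nat \<Rightarrow> nat \<Rightarrow> (nat \<Rightarrow> nat) set" where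
  "chains m N = {k. (\<forall>j. (j < 1 \<or> m < j) \<longrightarrow> k j = 0)
                    \<and> (\<forall>j\<in>{1..<m}. k (Suc j) \<le> k j) \<and> k 1 \<le> N}"

text \<open>Exponent -2 k_m + sum_{j=1}^m (k_j^2 + 2 k_j), which is a natural number.\<close>
definition qexp :: "nat \<Rightarrow> (nat \<Rightarrow> nat) \<Rightarrow> nat" where
  "qexp m k = (\<Sum>j = 1..m. k j ^ 2 + 2 * k j) - 2 * k m"

definition Gterm :: "nat \<Rightarrow> nat \<Rightarrow> (nat \<Rightarrow> nat) \<Rightarrow> rat fps" where
  "Gterm m n k =
     fps_X ^ qexp m k * qpoch n ^ 2
     * inverse (qpoch (k m) ^ 2 * qpoch (n - k 1) * (\<Prod>j = 1..<m. qpoch (k j - k (Suc j))))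
     * ((1 - fps_X ^ (n + 1)) * (1 - fps_X ^ (n + 2)))
     * inverse ((1 - fps_X ^ (n - k m + 1)) * (1 - fps_X ^ (n - k m + 2)))"

definition G :: "nat \<Rightarrow> nat \<Rightarrow> rat fps" where
  "G m n = (\<Sum>k \<in> chains m n. Gterm m n k)"

definition Sterm :: "nat \<Rightarrow> (nat \<Rightarrow> nat) \<Rightarrow> rat fps" where
  "Sterm m k =
     fps_X ^ qexp m k
     * inverse (qpoch (k m) ^ 2 * (\<Prod>j = 1..<m. qpoch (k j - k (Suc j))))"

text \<open>The infinite sum over all chains, as the limit of the partial sums over k_1 \<le> N.\<close>
definition S :: "nat \<Rightarrow> rat fps" where
  "S m = lim (\<lambda>N. \<Sum>k \<in> chains m N. Sterm m k)"

end

theory Submission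
  imports Defs
begin

unbundle fps_syntax

definition eqm :: "nat \<Rightarrow> rat fps \<Rightarrow> rat fps \<Rightarrow> bool" where
  "eqm n a b \<longleftrightarrow> (\<forall>i\<le>n. a $ i = b $ i)"

lemma eqm_refl[simp]: "eqm n a a" by (simp add: eqm_def)
lemma eqm_sym: "eqm n a b \<Longrightarrow> eqm n b a" by (simp add: eqm_def)
lemma eqm_trans: "eqm n a b \<Longrightarrow> eqm n b c \<Longrightarrow> eqm n a c" by (simp add: eqm_def)
lemma eqm_mono: "eqm n a b \<Longrightarrow> r \<le> n \<Longrightarrow> eqm r a b" by (simp add: eqm_def)

lemma eqm_add: "eqm n a b \<Longrightarrow> eqm n c d \<Longrightarrow> eqm n (a + c) (b + d)"
  by (simp add: eqm_def)

lemma eqm_sum: "(\<And>x. x \<in> A \<Longrightarrow> eqm n (f x) (g x)) \<Longrightarrow> eqm n (sum f A) (sum g A)"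
  by (induction A rule: infinite_finite_induct) (auto intro: eqm_add)

lemma eqm_mult: "eqm n a b \<Longrightarrow> eqm n c d \<Longrightarrow> eqm n (a * c) (b * d)"
  unfolding eqm_def fps_mult_nth by (intro allI impI sum.cong) auto

lemma eqm_inverse:
  assumes "eqm n a b" "a $ 0 \<noteq> 0"
  shows "eqm n (inverse a) (inverse b)"
proof -
  have b0: "b $ 0 \<noteq> 0" using assms by (simp add: eqm_def)
  have "inverse a = inverse a * b * inverse b"
    using b0 by (simp add: mult.assoc inverse_mult_eq_1')
  moreover have "eqm n (inverse a * b * inverse b) (inverse a * a * inverse b)"
    by (intro eqm_mult assms(1)[THEN eqm_sym] eqm_refl)
  moreover have "inverse a * a * inverse b = inverse b"
    using assms(2) by (simp add: inverse_mult_eq_1)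
  ultimately show ?thesis by metis
qed

lemma eqm_shift:
  assumes "e \<le> n \<Longrightarrow> eqm (n - e) a b"
  shows "eqm n (fps_X ^ e * a) (fps_X ^ e * b)"
  using assms unfolding eqm_def fps_X_power_mult_nth by auto

lemma eqm_shift0:
  assumes "n < e"
  shows "eqm n (fps_X ^ e * a) 0"
  using assms unfolding eqm_def fps_X_power_mult_nth by auto

lemma eqm_one_minus: "r < j \<Longrightarrow> eqm r (1 - fps_X ^ j) 1"
  unfolding eqm_def by (auto simp: fps_X_power_nth)

lemma eqm_prod_one:
  "finite A \<Longrightarrow> (\<forall>l\<in>A. r < l) \<Longrightarrow> eqm r (\<Prod>l\<in>A. 1 - fps_X ^ l) 1"
proof (induction A rule: finite_induct)
  case (insert x F)
  then have "eqm r ((1 - fps_X ^ x) * (\<Prod>l\<in>F. 1 - fps_X ^ l)) (1 * 1)"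
    by (intro eqm_mult eqm_one_minus) auto
  then show ?case using insert by simp
qed simp

lemma qpoch_stab: "i \<le> N \<Longrightarrow> eqm i (qpoch N) (qpoch i)"
proof -
  assume "i \<le> N"
  then have "{1..N} = {1..i} \<union> {i+1..N}" by auto
  then have "qpoch N = qpoch i * (\<Prod>l=i+1..N. 1 - fps_X ^ l)"
    unfolding qpoch_def by (subst prod.union_disjoint[symmetric]) auto
  moreover have "eqm i (qpoch i * (\<Prod>l=i+1..N. 1 - fps_X ^ l)) (qpoch i * 1)"
    by (intro eqm_mult eqm_refl eqm_prod_one) auto
  ultimately show ?thesis by simp
qed

lemma lim_stab:
  fixes f :: "nat \<Rightarrow> rat fps"
  assumes "\<And>i N. i \<le> N \<Longrightarrow> eqm i (f N) (f i)"
  shows "i \<le> N \<Longrightarrow> eqm i (lim f) (f N)"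
proof -
  define L where "L = Abs_fps (\<lambda>i. f i $ i)"
  have "f \<longlonglongrightarrow> L"
  proof (rule tendsto_fpsI)
    fix j
    show "eventually (\<lambda>N. f N $ j = L $ j) sequentially"
      using eventually_ge_at_top[of j]
      by eventually_elim (use assms in \<open>auto simp: L_def eqm_def\<close>)
  qed
  then have lL: "lim f = L" by (rule limI)
  assume iN: "i \<le> N"
  show ?thesis unfolding eqm_def lL
  proof safe
    fix j assume "j \<le> i"
    have "f N $ j = f j $ j" using assms[of j N] \<open>j \<le> i\<close> iN by (auto simp: eqm_def)
    then show "L $ j = f N $ j" by (simp add: L_def)
  qed
qed

lemma qpoch_inf_eqm: "r \<le> N \<Longrightarrow> eqm r (qpoch N) qpoch_inf"
  unfolding qpoch_inf_def by (rule eqm_sym, rule lim_stab, erule qpoch_stab)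

lemma qpoch0[simp]: "qpoch k $ 0 = 1"
  unfolding qpoch_def by (induction k) (auto simp: fps_X_power_nth)

lemma qpoch_inf0[simp]: "qpoch_inf $ 0 = 1"
  using qpoch_inf_eqm[of 0 0] by (simp add: eqm_def)

lemma prod_nth0: "finite A \<Longrightarrow> (\<Prod>j\<in>A. F j) $ 0 = (\<Prod>j\<in>A. (F j :: rat fps) $ 0)"
  by (induction A rule: finite_induct) auto

lemma chain_le:
  assumes "k \<in> Defs.chains m N" "1 \<le> j" "j \<le> m"
  shows "k j \<le> k 1"
  using assms(2,3)
proof (induction j rule: dec_induct)
  case (step j)
  then have "k (Suc j) \<le> k j" using assms(1) by (auto simp: chains_def)
  then show ?case using step by simp
qed simp

lemma chains_finite: "finite (Defs.chains m N)"
proof -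
  have "Defs.chains m N \<subseteq> {f. \<forall>x. (x \<in> {1..m} \<longrightarrow> f x \<in> {..N}) \<and> (x \<notin> {1..m} \<longrightarrow> f x = 0)}"
  proof
    fix k assume k: "k \<in> Defs.chains m N"
    have "k x \<in> {..N}" if "x \<in> {1..m}" for x
      using chain_le[OF k, of x] k that by (auto simp: chains_def)
    moreover have "k x = 0" if "x \<notin> {1..m}" for x
      using k that unfolding chains_def by (cases x) auto
    ultimately show "k \<in> {f. \<forall>x. (x \<in> {1..m} \<longrightarrow> f x \<in> {..N}) \<and> (x \<notin> {1..m} \<longrightarrow> f x = 0)}"
      by blast
  qed
  moreover have "finite {f. \<forall>x. (x \<in> {1..m} \<longrightarrow> f x \<in> {..N}) \<and> (x \<notin> {1..m} \<longrightarrow> (f x::nat) = 0)}"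
    by (rule finite_set_of_finite_funs) auto
  ultimately show ?thesis by (rule finite_subset)
qed

lemma qexp_ge:
  assumes "m \<ge> 1"
  shows "k 1 \<le> qexp m k \<and> k m \<le> qexp m k"
proof (cases "m = 1")
  case True
  then show ?thesis by (simp add: qexp_def power2_eq_square le_square)
next
  case False
  define f where "f j = k j ^ 2 + 2 * k j" for j
  have "(\<Sum>j\<in>{1,m}. f j) \<le> (\<Sum>j=1..m. f j)"
    by (rule sum_mono2) (use assms in auto)
  then have "f 1 + f m \<le> (\<Sum>j=1..m. f j)" using False by simp
  then have "k 1 ^ 2 + k m ^ 2 \<le> qexp m k" unfolding qexp_def f_def[abs_def] by simp
  moreover have "k 1 \<le> k 1 ^ 2" "k m \<le> k m ^ 2" by (simp_all add: power2_eq_square le_square)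
  ultimately show ?thesis by linarith
qed

lemma term_eqm:
  assumes m: "m \<ge> 1" and k1: "k 1 \<le> n"
  shows "eqm n (Gterm m n k) (qpoch_inf * Sterm m k)"
proof -
  define e where "e = qexp m k"
  define Q where "Q = qpoch_inf"
  define A where "A = qpoch (k m) ^ 2"
  define B where "B = (\<Prod>j = 1..<m. qpoch (k j - k (Suc j)))"
  define C where "C = (1 - fps_X ^ (n + 1)) * (1 - (fps_X::rat fps) ^ (n + 2))"
  define D where "D = (1 - fps_X ^ (n - k m + 1)) * (1 - (fps_X::rat fps) ^ (n - k m + 2))"
  define P where "P = qpoch n ^ 2 * inverse (A * qpoch (n - k 1) * B) * C * inverse D"
  have G: "Gterm m n k = fps_X ^ e * P"
    by (simp only: Gterm_def P_def A_def B_def C_def D_def e_def mult.assoc)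
  have St: "qpoch_inf * Sterm m k = fps_X ^ e * (Q * inverse (A * B))"
    by (simp add: Sterm_def Q_def A_def B_def e_def mult.left_commute)
  have ge: "k 1 \<le> e" "k m \<le> e" using qexp_ge[OF m, of k] by (auto simp: e_def)
  show ?thesis unfolding G St
  proof (rule eqm_shift)
    assume "e \<le> n"
    define r where "r = n - e"
    have A0: "A $ 0 = 1" "B $ 0 = 1" by (simp_all add: A_def B_def prod_nth0 fps_nth_power_0)
    have h1: "eqm r (qpoch n) Q" unfolding Q_def by (rule qpoch_inf_eqm) (simp add: r_def)
    have h2: "eqm r (qpoch (n - k 1)) Q" unfolding Q_def by (rule qpoch_inf_eqm) (use ge in \<open>simp add: r_def\<close>)
    have "eqm r C (1 * 1)" unfolding C_def by (intro eqm_mult eqm_one_minus) (auto simp: r_def)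
    then have h3: "eqm r C 1" by simp
    have "eqm r D (1 * 1)" unfolding D_def using ge k1 \<open>e \<le> n\<close> by (intro eqm_mult eqm_one_minus) (auto simp: r_def)
    then have h4: "eqm r D 1" by simp
    have D0: "D $ 0 \<noteq> 0" using h4 by (simp add: eqm_def)
    have h5: "eqm r (inverse (A * qpoch (n - k 1) * B)) (inverse (A * Q * B))"
      by (intro eqm_inverse eqm_mult eqm_refl h2) (simp add: A0)
    have h6: "eqm r (inverse D) (inverse 1)" by (intro eqm_inverse h4 D0)
    have "eqm r P (Q ^ 2 * inverse (A * Q * B) * 1 * inverse 1)"
      unfolding P_def power2_eq_square by (intro eqm_mult h1 h3 h5 h6)
    moreover have "Q * inverse Q = 1" by (rule inverse_mult_eq_1') (simp add: Q_def)
    then have "Q ^ 2 * inverse (A * Q * B) * 1 * inverse 1 = Q * inverse (A * B)"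
      by (simp add: fps_inverse_mult power2_eq_square mult_ac)
    ultimately show "eqm (n - e) P (Q * inverse (A * B))" by (simp add: r_def)
  qed
qed

lemma tail_eqm:
  assumes m: "m \<ge> 1" and "i < k 1"
  shows "eqm i (Sterm m k) 0"
  unfolding Sterm_def by (rule eqm_shift0) (use qexp_ge[OF m, of k] assms in auto)

lemma T_stab:
  assumes m: "m \<ge> 1" and iN: "i \<le> N"
  shows "eqm i (\<Sum>k\<in>Defs.chains m N. Sterm m k) (\<Sum>k\<in>Defs.chains m i. Sterm m k)"
proof -
  have sub: "Defs.chains m i \<subseteq> Defs.chains m N" using iN by (auto simp: chains_def)
  have "(\<Sum>k\<in>Defs.chains m N. Sterm m k) = (\<Sum>k\<in>Defs.chains m N - Defs.chains m i. Sterm m k) + (\<Sum>k\<in>Defs.chains m i. Sterm m k)"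
    by (rule sum.subset_diff[OF sub chains_finite])
  moreover have "eqm i (\<Sum>k\<in>Defs.chains m N - Defs.chains m i. Sterm m k) (\<Sum>k\<in>Defs.chains m N - Defs.chains m i. 0)"
  proof (rule eqm_sum)
    fix k assume "k \<in> Defs.chains m N - Defs.chains m i"
    then have "i < k 1" by (auto simp: chains_def)
    then show "eqm i (Sterm m k) 0" by (rule tail_eqm[OF m])
  qed
  ultimately show ?thesis using eqm_add[OF _ eqm_refl] by fastforce
qed

theorem mainTheorem4:
  fixes m n :: nat
  assumes "m \<ge> 1"
  shows "\<forall>i \<le> n. fps_nth (G m n) i = fps_nth (qpoch_inf * S m) i"
proof -
  have "eqm n (G m n) (\<Sum>k\<in>Defs.chains m n. qpoch_inf * Sterm m k)"
    unfolding G_def by (rule eqm_sum, rule term_eqm[OF assms]) (auto simp: chains_def)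
  also have "(\<Sum>k\<in>Defs.chains m n. qpoch_inf * Sterm m k) = qpoch_inf * (\<Sum>k\<in>Defs.chains m n. Sterm m k)"
    by (simp add: sum_distrib_left)
  finally have 1: "eqm n (G m n) (qpoch_inf * (\<Sum>k\<in>Defs.chains m n. Sterm m k))" .
  have "eqm n (S m) (\<Sum>k\<in>Defs.chains m n. Sterm m k)"
    unfolding S_def by (rule lim_stab) (use T_stab[OF assms] in auto)
  then have "eqm n (qpoch_inf * (\<Sum>k\<in>Defs.chains m n. Sterm m k)) (qpoch_inf * S m)"
    by (intro eqm_mult eqm_refl) (erule eqm_sym)
  with 1 have "eqm n (G m n) (qpoch_inf * S m)" by (rule eqm_trans)
  then show ?thesis by (simp add: eqm_def)
qed

end
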